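(* Let $\Phi$ be an irreducible crystallographic root system with simple system $S$ and positive system $\Phi^+$, ordered as the root poset. If $\alpha,\beta,\gamma\in\Phi^+$, $\beta+\gamma\in\Phi^+$ and $\alpha\le\beta+\gamma$, then $\alpha\le\beta$, or $\alpha\le\gamma$, or $\alpha=\beta'+\gamma'$ for some $\beta',\gamma'\in\Phi^+$ with $\beta'\le\beta$ and $\gamma'\le\gamma$.
   Context: The root poset is $\Phi^+$ with the partial order $\alpha\le\beta$ iff $\beta-\alpha$ is a linear combination of simple roots (elements of $S$) with nonnegative integer coefficients. *)

theory Defs
  imports "HOL-Analysis.Analysis"
begin

definition refl_root :: "'a::euclidean_space \<Rightarrow> 'a \<Rightarrow> 'a" where
  "refl_root a x = x - (2 * (x \<bullet> a) / (a \<bullet> a)) *\<^sub>R a"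

text \<open>Reduced crystallographic root system (not required to span the space).\<close>
definition crystallographic_root_system :: "'a::euclidean_space set \<Rightarrow> bool" where
  "crystallographic_root_system \<Phi> \<longleftrightarrow>
     finite \<Phi> \<and> 0 \<notin> \<Phi> \<and>
     (\<forall>a\<in>\<Phi>. \<forall>c::real. c *\<^sub>R a \<in> \<Phi> \<longleftrightarrow> c = 1 \<or> c = -1) \<and>
     (\<forall>a\<in>\<Phi>. \<forall>b\<in>\<Phi>. refl_root a b \<in> \<Phi>) \<and>
     (\<forall>a\<in>\<Phi>. \<forall>b\<in>\<Phi>. 2 * (b \<bullet> a) / (a \<bullet> a) \<in> \<int>)"

definition irreducible_root_system :: "'a::euclidean_space set \<Rightarrow> bool" where
  "irreducible_root_system \<Phi> \<longleftrightarrow> \<Phi> \<noteq> {} \<and>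
     \<not> (\<exists>A B. A \<union> B = \<Phi> \<and> A \<noteq> {} \<and> B \<noteq> {} \<and> (\<forall>a\<in>A. \<forall>b\<in>B. a \<bullet> b = 0))"

definition simple_system :: "'a::euclidean_space set \<Rightarrow> 'a set \<Rightarrow> bool" where
  "simple_system \<Phi> S \<longleftrightarrow> S \<subseteq> \<Phi> \<and> independent S \<and>
     (\<forall>b\<in>\<Phi>. \<exists>c. b = (\<Sum>s\<in>S. c s *\<^sub>R s) \<and> ((\<forall>s\<in>S. c s \<ge> 0) \<or> (\<forall>s\<in>S. c s \<le> 0)))"

definition positive_roots :: "'a::euclidean_space set \<Rightarrow> 'a set \<Rightarrow> 'a set" where
  "positive_roots \<Phi> S = {b\<in>\<Phi>. \<exists>c. b = (\<Sum>s\<in>S. c s *\<^sub>R s) \<and> (\<forall>s\<in>S. c s \<ge> 0)}"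

definition root_le :: "'a::euclidean_space set \<Rightarrow> 'a \<Rightarrow> 'a \<Rightarrow> bool" where
  "root_le S a b \<longleftrightarrow> (\<exists>c::'a \<Rightarrow> nat. b - a = (\<Sum>s\<in>S. real (c s) *\<^sub>R s))"

end

theory Submission
  imports Defs
begin

locale rs =
  fixes \<Phi> S :: "'a::euclidean_space set"
  assumes crs: "crystallographic_root_system \<Phi>" and ss: "simple_system \<Phi> S"
begin

lemma zero: "0 \<notin> \<Phi>" using crs unfolding crystallographic_root_system_def by blast
lemma scal: "a \<in> \<Phi> \<Longrightarrow> c *\<^sub>R a \<in> \<Phi> \<longleftrightarrow> c = 1 \<or> c = -1"
  using crs unfolding crystallographic_root_system_def by blast
lemma reflc: "a \<in> \<Phi> \<Longrightarrow> b \<in> \<Phi> \<Longrightarrow> refl_root a b \<in> \<Phi>"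
  using crs unfolding crystallographic_root_system_def by blast
lemma intc: "a \<in> \<Phi> \<Longrightarrow> b \<in> \<Phi> \<Longrightarrow> 2 * (b \<bullet> a) / (a \<bullet> a) \<in> \<int>"
  using crs unfolding crystallographic_root_system_def by blast
lemma neg: "a \<in> \<Phi> \<Longrightarrow> -a \<in> \<Phi>"
  using scal[of a "-1"] by simp
lemma SPhi: "S \<subseteq> \<Phi>" using ss unfolding simple_system_def by blast
lemma indep: "independent S" using ss unfolding simple_system_def by blast
lemma finS: "finite S" using indep[unfolded independent_explicit] by (rule conjunct1)
lemma coh: "b \<in> \<Phi> \<Longrightarrow> \<exists>c. b = (\<Sum>s\<in>S. c s *\<^sub>R s) \<and> ((\<forall>s\<in>S. c s \<ge> 0) \<or> (\<forall>s\<in>S. c s \<le> 0))"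
  using ss unfolding simple_system_def by blast

lemma uniq: assumes "(\<Sum>s\<in>S. a s *\<^sub>R s) = (\<Sum>s\<in>S. b s *\<^sub>R s)" "t \<in> S" shows "a t = b t"
proof -
  have s0: "(\<Sum>s\<in>S. (a s - b s) *\<^sub>R s) = 0" using assms(1)
    by (simp add: scaleR_diff_left sum_subtractf)
  have H: "\<forall>c. (\<Sum>v\<in>S. c v *\<^sub>R v) = 0 \<longrightarrow> (\<forall>v\<in>S. c v = 0)"
    using indep[unfolded independent_explicit] by (rule conjunct2)
  have "a t - b t = 0" using H[rule_format, of "\<lambda>s. a s - b s", OF s0 assms(2)] by simp
  then show ?thesis by simp
qed

lemma F1: assumes a: "a \<in> \<Phi>" and b: "b \<in> \<Phi>" and p: "a \<bullet> b > 0" and ne: "a \<noteq> b"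
  shows "a - b \<in> \<Phi>"
proof -
  have a0: "a \<noteq> 0" and b0: "b \<noteq> 0" using a b zero by auto
  have aa: "a \<bullet> a > 0" "b \<bullet> b > 0" using a0 b0 by auto
  have "a \<bullet> b \<noteq> norm a * norm b"
  proof
    assume "a \<bullet> b = norm a * norm b"
    then have eq: "norm a *\<^sub>R b = norm b *\<^sub>R a" using norm_cauchy_schwarz_eq by blast
    have "b = inverse (norm a) *\<^sub>R (norm a *\<^sub>R b)" using a0 by simp
    also have "\<dots> = (norm b / norm a) *\<^sub>R a" unfolding eq by (simp add: field_simps)
    finally have bb: "b = (norm b / norm a) *\<^sub>R a" .
    then have "(norm b / norm a) *\<^sub>R a \<in> \<Phi>" using b by simp
    then have "norm b / norm a = 1 \<or> norm b / norm a = -1" using scal a by blast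
    moreover have "norm b / norm a > 0" using a0 b0 by simp
    ultimately have "norm b / norm a = 1" by linarith
    then show False using bb ne by (metis scaleR_one)
  qed
  moreover have "a \<bullet> b \<le> norm a * norm b" by (rule norm_cauchy_schwarz)
  ultimately have lt: "a \<bullet> b < norm a * norm b" by simp
  have sq: "(a \<bullet> b)^2 < (a \<bullet> a) * (b \<bullet> b)"
  proof -
    have "(a \<bullet> b)^2 < (norm a * norm b)^2" using lt p
      by (simp add: power_strict_mono)
    also have "\<dots> = (a \<bullet> a) * (b \<bullet> b)" by (simp add: power_mult_distrib power2_norm_eq_inner)
    finally show ?thesis .
  qed
  obtain k where k: "2 * (b \<bullet> a) / (a \<bullet> a) = of_int k" using intc[OF a b] Ints_cases by metis
  obtain l where l: "2 * (a \<bullet> b) / (b \<bullet> b) = of_int l" using intc[OF b a] Ints_cases by metis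
  have "2 * (b \<bullet> a) / (a \<bullet> a) > 0" using p aa by (simp add: inner_commute)
  then have "real_of_int k > 0" using k by simp
  then have kp: "k \<ge> 1" by simp
  have "2 * (a \<bullet> b) / (b \<bullet> b) > 0" using p aa by simp
  then have "real_of_int l > 0" using l by simp
  then have lp: "l \<ge> 1" by simp
  have "real_of_int (k * l) = (2 * (b \<bullet> a) / (a \<bullet> a)) * (2 * (a \<bullet> b) / (b \<bullet> b))"
    by (simp add: k l)
  also have "\<dots> = 4 * (a \<bullet> b)^2 / ((a \<bullet> a) * (b \<bullet> b))"
    by (simp add: inner_commute power2_eq_square)
  also have "\<dots> < 4" using sq aa by (simp add: field_simps)
  finally have r4: "real_of_int (k * l) < 4" .
  have "k * l < 4" by (metis of_int_less_iff of_int_numeral r4)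
  then have "k = 1 \<or> l = 1"
  proof (rule contrapos_pp)
    assume "\<not> (k = 1 \<or> l = 1)"
    then have "k \<ge> 2" "l \<ge> 2" using kp lp by auto
    then have "k * l \<ge> 2 * 2" by (intro mult_mono) auto
    then show "\<not> k * l < 4" by simp
  qed
  then show ?thesis
  proof
    assume "k = 1"
    then have "refl_root a b = b - a" using k p unfolding refl_root_def by (simp add: inner_commute)
    from reflc[OF a b] this have "b - a \<in> \<Phi>" by (simp only:)
    then show ?thesis using neg by fastforce
  next
    assume "l = 1"
    then have "refl_root b a = a - b" using l p unfolding refl_root_def by (simp add: inner_commute)
    from reflc[OF b a] this show ?thesis by (simp only:)
  qed
qed


abbreviation P where "P \<equiv> positive_roots \<Phi> S"

lemma simple_repr: "s \<in> S \<Longrightarrow> s = (\<Sum>t\<in>S. (if t = s then 1 else 0) *\<^sub>R t)"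
proof -
  assume s: "s \<in> S"
  have "(\<Sum>t\<in>S. (if t = s then 1 else 0) *\<^sub>R t) = (\<Sum>t\<in>S. if t = s then t else 0)"
    by (rule sum.cong) auto
  also have "\<dots> = s" using s finS by simp
  finally show ?thesis by simp
qed

lemma PD: "x \<in> P \<Longrightarrow> x \<in> \<Phi>" unfolding positive_roots_def by blast

lemma S_P: "s \<in> S \<Longrightarrow> s \<in> P"
  unfolding positive_roots_def using SPhi simple_repr[of s]
  by (intro CollectI conjI) (auto intro!: exI[of _ "\<lambda>t. if t = s then 1 else 0"])

lemma nonneg_antisym:
  assumes "x = (\<Sum>t\<in>S. a t *\<^sub>R t)" "-x = (\<Sum>t\<in>S. b t *\<^sub>R t)"
    "\<forall>t\<in>S. a t \<ge> 0" "\<forall>t\<in>S. b t \<ge> 0"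
  shows "x = 0"
proof -
  have "(\<Sum>t\<in>S. (a t + b t) *\<^sub>R t) = x + (-x)"
    unfolding scaleR_add_left sum.distrib assms(1)[symmetric] assms(2)[symmetric] ..
  also have "\<dots> = (\<Sum>t\<in>S. (0::real) *\<^sub>R t)" by simp
  finally have h0: "(\<Sum>t\<in>S. (a t + b t) *\<^sub>R t) = (\<Sum>t\<in>S. (0::real) *\<^sub>R t)" .
  have "\<forall>t\<in>S. a t + b t = 0" using uniq[of "\<lambda>t. a t + b t" "\<lambda>t. 0", OF h0] by simp
  then have "\<forall>t\<in>S. a t = 0" using assms(3,4) by (smt (verit))
  then show ?thesis using assms(1) by simp
qed

lemma pos_nonzero: "x \<in> P \<Longrightarrow> x \<noteq> 0" using PD zero by blast

lemma L2: assumes b: "b \<in> P" and s: "s \<in> S" and bs: "b - s \<in> \<Phi>" shows "b - s \<in> P"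
proof -
  obtain d where d: "b - s = (\<Sum>t\<in>S. d t *\<^sub>R t)" and sg: "(\<forall>t\<in>S. d t \<ge> 0) \<or> (\<forall>t\<in>S. d t \<le> 0)"
    using coh[OF bs] by blast
  show ?thesis
  proof (cases "\<forall>t\<in>S. d t \<ge> 0")
    case True then show ?thesis using d bs unfolding positive_roots_def by blast
  next
    case False
    then have dn: "\<forall>t\<in>S. d t \<le> 0" using sg by blast
    obtain e where e: "b = (\<Sum>t\<in>S. e t *\<^sub>R t)" and en: "\<forall>t\<in>S. e t \<ge> 0"
      using b unfolding positive_roots_def by blast
    have "(\<Sum>t\<in>S. (e t - d t) *\<^sub>R t) = (\<Sum>t\<in>S. e t *\<^sub>R t) - (\<Sum>t\<in>S. d t *\<^sub>R t)"
      by (simp add: scaleR_diff_left sum_subtractf)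
    also have "\<dots> = s" unfolding d[symmetric] e[symmetric] by simp
    also have "\<dots> = (\<Sum>t\<in>S. (if t = s then 1 else 0) *\<^sub>R t)" using simple_repr[OF s] .
    finally have h1: "(\<Sum>t\<in>S. (e t - d t) *\<^sub>R t) = (\<Sum>t\<in>S. (if t = s then 1 else 0) *\<^sub>R t)" .
    have eq: "\<And>t. t \<in> S \<Longrightarrow> e t - d t = (if t = s then 1 else 0)"
      using uniq[of "\<lambda>t. e t - d t" "\<lambda>t. if t = s then 1 else 0", OF h1] by simp
    have e0: "\<And>t. t \<in> S \<Longrightarrow> t \<noteq> s \<Longrightarrow> e t = 0"
      using eq dn en by (smt (verit))
    have "b = (\<Sum>t\<in>S. (if t = s then e s *\<^sub>R s else 0))"
      unfolding e by (rule sum.cong) (auto simp: e0)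
    also have "\<dots> = e s *\<^sub>R s" using s finS by simp
    finally have bes: "b = e s *\<^sub>R s" .
    then have "e s *\<^sub>R s \<in> \<Phi>" using PD[OF b] by simp
    then have "e s = 1 \<or> e s = -1" using scal SPhi s by blast
    then have "e s = 1" using en s by auto
    then have "b = s" using bes by simp
    then show ?thesis using bs zero by simp
  qed
qed

lemma plus_pos: assumes a: "a \<in> P" and s: "s \<in> S" and as: "a + s \<in> \<Phi>" shows "a + s \<in> P"
proof -
  obtain e where e: "a = (\<Sum>t\<in>S. e t *\<^sub>R t)" and en: "\<forall>t\<in>S. e t \<ge> 0"
    using a unfolding positive_roots_def by blast
  have "a + s = (\<Sum>t\<in>S. (e t + (if t = s then 1 else 0)) *\<^sub>R t)"
    using e simple_repr[OF s] by (simp add: scaleR_add_left sum.distrib)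
  moreover have "\<forall>t\<in>S. e t + (if t = s then 1 else 0) \<ge> 0" using en by auto
  ultimately show ?thesis using as unfolding positive_roots_def
    by (intro CollectI conjI exI[of _ "\<lambda>t. e t + (if t = s then 1 else 0)"]) auto
qed

lemma root_le_refl: "root_le S x x"
  unfolding root_le_def by (rule exI[of _ "\<lambda>_. 0"]) simp

lemma root_le_trans: "root_le S x y \<Longrightarrow> root_le S y z \<Longrightarrow> root_le S x z"
proof -
  assume "root_le S x y" "root_le S y z"
  then obtain c d where c: "y - x = (\<Sum>s\<in>S. real (c s) *\<^sub>R s)" and d: "z - y = (\<Sum>s\<in>S. real (d s) *\<^sub>R s)"
    unfolding root_le_def by blast
  have "z - x = (\<Sum>s\<in>S. real (c s + d s) *\<^sub>R s)"
    using c d by (simp add: scaleR_add_left sum.distrib algebra_simps)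
  then show ?thesis unfolding root_le_def by (rule exI[of _ "\<lambda>s. c s + d s"])
qed

lemma root_le_simple: "s \<in> S \<Longrightarrow> root_le S (x - s) x"
proof -
  assume s: "s \<in> S"
  have "x - (x - s) = (\<Sum>t\<in>S. real (if t = s then 1 else 0) *\<^sub>R t)"
    using simple_repr[OF s] by (simp add: if_distrib cong: if_cong)
  then show ?thesis unfolding root_le_def by (rule exI[of _ "\<lambda>t. if t = s then 1 else 0"])
qed

lemma root_le_simple2: "s \<in> S \<Longrightarrow> root_le S x (x + s)"
  using root_le_simple[of s "x + s"] by simp

lemma dec:
  assumes s: "s \<in> S" and c: "c s \<ge> 1"
  shows "(\<Sum>t\<in>S. real (c t) *\<^sub>R t) = (\<Sum>t\<in>S. real ((c(s := c s - 1)) t) *\<^sub>R t) + s"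
    and "sum c S = sum (c(s := c s - 1)) S + 1"
proof -
  have "(\<Sum>t\<in>S. real (c t) *\<^sub>R t) = (\<Sum>t\<in>S. real ((c(s := c s - 1)) t) *\<^sub>R t + (if t = s then 1 else 0) *\<^sub>R t)"
    by (rule sum.cong) (use c in \<open>auto simp: of_nat_diff scaleR_diff_left\<close>)
  also have "\<dots> = (\<Sum>t\<in>S. real ((c(s := c s - 1)) t) *\<^sub>R t) + s"
    by (simp add: sum.distrib simple_repr[OF s, symmetric])
  finally show "(\<Sum>t\<in>S. real (c t) *\<^sub>R t) = (\<Sum>t\<in>S. real ((c(s := c s - 1)) t) *\<^sub>R t) + s" .
  have "sum c S = c s + sum c (S - {s})" using sum.remove[OF finS s] .
  moreover have "sum (c(s := c s - 1)) S = (c(s := c s - 1)) s + sum (c(s := c s - 1)) (S - {s})"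
    by (rule sum.remove[OF finS s])
  moreover have "sum (c(s := c s - 1)) (S - {s}) = sum c (S - {s})" by (rule sum.cong) auto
  ultimately show "sum c S = sum (c(s := c s - 1)) S + 1" using c by (simp only: fun_upd_same)
qed

lemma OS:
  assumes b: "b \<in> \<Phi>" and g: "g \<in> \<Phi>" and a: "a \<in> \<Phi>" and s: "s \<in> \<Phi>"
    and as: "a + s \<in> \<Phi>" and eq: "a + s = b + g"
  shows "(b = s \<or> b - s \<in> \<Phi>) \<or> (g = s \<or> g - s \<in> \<Phi>)"
proof (rule ccontr)
  assume n: "\<not> ?thesis"
  have bs: "b \<bullet> s \<le> 0" using F1[OF b s] n by force
  have gs: "g \<bullet> s \<le> 0" using F1[OF g s] n by force
  have ag: "a \<bullet> g \<le> 0"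
  proof (rule ccontr)
    assume "\<not> a \<bullet> g \<le> 0"
    then have "a = g \<or> a - g \<in> \<Phi>" using F1[OF a g] by force
    moreover have "a - g = b - s" using eq by (simp add: algebra_simps)
    moreover have "a = g \<Longrightarrow> b = s" using eq by simp
    ultimately show False using n by auto
  qed
  have ab: "a \<bullet> b \<le> 0"
  proof (rule ccontr)
    assume "\<not> a \<bullet> b \<le> 0"
    then have "a = b \<or> a - b \<in> \<Phi>" using F1[OF a b] by force
    moreover have "a - b = g - s" using eq by (simp add: algebra_simps)
    moreover have "a = b \<Longrightarrow> g = s" using eq by simp
    ultimately show False using n by auto
  qed
  have "(a + s) \<bullet> (a + s) = (a + s) \<bullet> (b + g)" using eq by simp
  also have "\<dots> = a \<bullet> b + a \<bullet> g + b \<bullet> s + g \<bullet> s"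
    by (simp add: inner_add_left inner_add_right inner_commute)
  also have "\<dots> \<le> 0" using ab ag bs gs by simp
  finally have "a + s = 0" by (metis inner_gt_zero_iff not_le)
  then show False using as zero by simp
qed


definition concl where
  "concl a b g \<longleftrightarrow> root_le S a b \<or> root_le S a g \<or>
    (\<exists>b' g'. b' \<in> P \<and> g' \<in> P \<and> root_le S b' b \<and> root_le S g' g \<and> a = b' + g')"

lemma concl_swap: "concl a b g \<Longrightarrow> concl a g b"
  unfolding concl_def by (auto simp: add.commute)

lemma concl_mono: assumes h: "concl a b1 g" and l: "root_le S b1 b" shows "concl a b g"
  using h unfolding concl_def
  by (elim disjE exE conjE) (blast intro: root_le_trans[OF _ l])+

lemma fin3:
  assumes b': "b' \<in> P" and g': "g' \<in> P" and lb: "root_le S b' b" and lg: "root_le S g' g"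
    and a: "a + s = b' + g'" and s: "s \<in> S" and h: "b' = s \<or> b' - s \<in> \<Phi>"
  shows "concl a b g"
proof (cases "b' = s")
  case True
  then have "a = g'" using a by simp
  then show ?thesis using lg unfolding concl_def by blast
next
  case False
  then have "b' - s \<in> P" using L2[OF b' s] h by blast
  moreover have "root_le S (b' - s) b" using root_le_trans[OF root_le_simple[OF s] lb] .
  moreover have "a = (b' - s) + g'" using a by (simp add: algebra_simps)
  ultimately show ?thesis using g' lg unfolding concl_def by blast
qed

lemma main:
  "\<And>a b g c. a \<in> P \<Longrightarrow> b \<in> P \<Longrightarrow> g \<in> P \<Longrightarrow> b + g \<in> P \<Longrightarrow>
     b + g - a = (\<Sum>s\<in>S. real (c s) *\<^sub>R s) \<Longrightarrow> sum c S = n \<Longrightarrow> concl a b g"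
proof (induction n rule: less_induct)
  case (less n a b g c)
  show ?case
  proof (cases "b + g - a = 0")
    case True
    then have "a = b + g" by simp
    then show ?thesis using less.prems root_le_refl unfolding concl_def by blast
  next
    case False
    define eta where "eta = b + g - a"
    have "eta \<bullet> eta > 0" using False eta_def by simp
    also have "eta \<bullet> eta = eta \<bullet> (\<Sum>t\<in>S. real (c t) *\<^sub>R t)"
      using less.prems(5) eta_def by simp
    also have "\<dots> = (\<Sum>t\<in>S. real (c t) * (eta \<bullet> t))" by (simp add: inner_sum_right)
    finally have "(\<Sum>t\<in>S. real (c t) * (eta \<bullet> t)) > 0" .
    then obtain s where s: "s \<in> S" and pos: "real (c s) * (eta \<bullet> s) > 0"
      by (meson not_le sum_nonpos)
    have cs: "c s \<ge> 1" using pos by (cases "c s") auto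
    have es: "eta \<bullet> s > 0" using pos by (simp add: zero_less_mult_iff)
    define c' where "c' = c(s := c s - 1)"
    have vec: "b + g - a - s = (\<Sum>t\<in>S. real (c' t) *\<^sub>R t)"
      using dec(1)[of s c, OF s cs] less.prems(5) unfolding c'_def by (simp add: algebra_simps)
    have lt: "sum c' S < n" using dec(2)[of s c, OF s cs] less.prems(6) unfolding c'_def by simp
    have sP: "s \<in> P" using S_P[OF s] .
    have sPhi: "s \<in> \<Phi>" using PD[OF sP] .
    obtain ea where ea: "a = (\<Sum>t\<in>S. ea t *\<^sub>R t)" and ean: "\<forall>t\<in>S. ea t \<ge> 0"
      using less.prems(1) unfolding positive_roots_def by blast
    have c'n: "\<forall>t\<in>S. real (c' t) \<ge> 0" by simp
    show ?thesis
    proof (cases "(b + g) \<bullet> s > 0")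
      case True
      have ne: "b + g \<noteq> s"
      proof
        assume "b + g = s"
        then have "-a = (\<Sum>t\<in>S. real (c' t) *\<^sub>R t)" using vec by simp
        then have "a = 0" using nonneg_antisym[OF ea _ ean c'n] by blast
        then show False using pos_nonzero[OF less.prems(1)] by simp
      qed
      have dP: "b + g - s \<in> P"
        using L2[OF less.prems(4) s F1[OF PD[OF less.prems(4)] sPhi True ne]] .
      have key: "\<And>b g. b \<in> P \<Longrightarrow> g \<in> P \<Longrightarrow> b + g - s \<in> P \<Longrightarrow>
          b + g - a - s = (\<Sum>t\<in>S. real (c' t) *\<^sub>R t) \<Longrightarrow> b \<bullet> s > 0 \<Longrightarrow> concl a b g"
      proof -
        fix b g assume bP: "b \<in> P" and gP: "g \<in> P" and dP: "b + g - s \<in> P"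
          and v: "b + g - a - s = (\<Sum>t\<in>S. real (c' t) *\<^sub>R t)" and bs: "b \<bullet> s > 0"
        show "concl a b g"
        proof (cases "b = s")
          case True
          then have "g - a = (\<Sum>t\<in>S. real (c' t) *\<^sub>R t)" using v by simp
          then show ?thesis unfolding concl_def root_le_def by blast
        next
          case False
          have bsP: "b - s \<in> P" using L2[OF bP s F1[OF PD[OF bP] sPhi bs False]] .
          have "concl a (b - s) g"
            using less.IH[OF lt less.prems(1) bsP gP _ _ refl] dP v by (simp add: algebra_simps)
          then show ?thesis using concl_mono root_le_simple[OF s] by blast
        qed
      qed
      have "b \<bullet> s > 0 \<or> g \<bullet> s > 0" using True by (simp add: inner_add_left) linarith
      then show ?thesis
      proof
        assume "b \<bullet> s > 0" then show ?thesis using key less.prems(2,3) dP vec by blast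
      next
        assume "g \<bullet> s > 0"
        then have "concl a g b" using key[of g b] less.prems(2,3) dP vec by (simp add: add.commute)
        then show ?thesis using concl_swap by blast
      qed
    next
      case False
      have as: "a \<bullet> s < 0" using es False unfolding eta_def by (simp add: inner_diff_left)
      have ane: "a \<noteq> -s"
      proof
        assume "a = -s"
        then have "-a = (\<Sum>t\<in>S. (if t = s then 1 else 0) *\<^sub>R t)" using simple_repr[OF s] by simp
        then have "a = 0" using nonneg_antisym[OF ea _ ean] by auto
        then show False using pos_nonzero[OF less.prems(1)] by simp
      qed
      have "a - (-s) \<in> \<Phi>" using F1[OF PD[OF less.prems(1)] neg[OF sPhi]] as ane by simp
      then have asPhi: "a + s \<in> \<Phi>" by simp
      have asP: "a + s \<in> P" using plus_pos[OF less.prems(1) s asPhi] .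
      have "concl (a + s) b g"
        using less.IH[OF lt asP less.prems(2,3,4) _ refl] vec by (simp add: algebra_simps)
      then consider "root_le S (a + s) b" | "root_le S (a + s) g"
        | b' g' where "b' \<in> P" "g' \<in> P" "root_le S b' b" "root_le S g' g" "a + s = b' + g'"
        unfolding concl_def by blast
      then show ?thesis
      proof cases
        case 1 then show ?thesis using root_le_trans[OF root_le_simple2[OF s]] unfolding concl_def by blast
      next
        case 2 then show ?thesis using root_le_trans[OF root_le_simple2[OF s]] unfolding concl_def by blast
      next
        case (3 b' g')
        have "(b' = s \<or> b' - s \<in> \<Phi>) \<or> (g' = s \<or> g' - s \<in> \<Phi>)"
          using OS[OF PD[OF 3(1)] PD[OF 3(2)] PD[OF less.prems(1)] sPhi asPhi 3(5)] .
        then show ?thesis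
        proof
          assume "b' = s \<or> b' - s \<in> \<Phi>"
          then show ?thesis using fin3[OF 3(1-5) s] by blast
        next
          assume h: "g' = s \<or> g' - s \<in> \<Phi>"
          have "a + s = g' + b'" using 3(5) by (simp add: add.commute)
          then have "concl a g b" using fin3[OF 3(2) 3(1) 3(4) 3(3) _ s h] by blast
          then show ?thesis using concl_swap by blast
        qed
      qed
    qed
  qed
qed

end

theorem lemma8:
  fixes \<Phi> S :: "'a::euclidean_space set" and \<alpha> \<beta> \<gamma> :: 'a
  assumes "crystallographic_root_system \<Phi>"
    and "irreducible_root_system \<Phi>"
    and "simple_system \<Phi> S"
    and "\<alpha> \<in> positive_roots \<Phi> S" and "\<beta> \<in> positive_roots \<Phi> S" and "\<gamma> \<in> positive_roots \<Phi> S"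
    and "\<beta> + \<gamma> \<in> positive_roots \<Phi> S"
    and "root_le S \<alpha> (\<beta> + \<gamma>)"
  shows "root_le S \<alpha> \<beta> \<or> root_le S \<alpha> \<gamma> \<or>
    (\<exists>\<beta>' \<gamma>'. \<beta>' \<in> positive_roots \<Phi> S \<and> \<gamma>' \<in> positive_roots \<Phi> S \<and>
       root_le S \<beta>' \<beta> \<and> root_le S \<gamma>' \<gamma> \<and> \<alpha> = \<beta>' + \<gamma>')"
proof -
  interpret rs \<Phi> S using assms(1,3) by unfold_locales
  obtain c where c: "\<beta> + \<gamma> - \<alpha> = (\<Sum>s\<in>S. real (c s) *\<^sub>R s)"
    using assms(8) unfolding root_le_def by blast
  have "concl \<alpha> \<beta> \<gamma>" using main[OF assms(4-7) c refl] .
  then show ?thesis unfolding concl_def .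
qed

end
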